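(* Let $T\in\mathbb R^{m\times n}$ be injective and satisfy the positive cone condition, $y\in\mathbb R^m$, and $\lambda>0$. Then there exists $\varepsilon\in(0,\lambda)$ such that $|x_\mu^i|\le|x_\lambda^i|$ for all $i\in I(\lambda)$ and all $\mu\in[\lambda-\varepsilon,\lambda]$.
   Context: For $\lambda>0$, $x_\lambda$ is the unique minimizer of $x\mapsto\frac{\lambda}{2}\|Tx-y\|_2^2+\|x\|_1$ on $\mathbb R^n$; $I(\lambda)=\{i:x_\lambda^i\ne0\}$. Positive cone condition: for every nonempty $J\subset\{1,\dots,n\}$, with $T^J$ the submatrix of columns indexed by $J$ and $S_J=((T^J)^TT^J)^{-1}$, one has $(S_J)_{i,i}-\sum_{j\ne i}|(S_J)_{i,j}|\ge0$ for all $i\in J$. *)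

theory Defs
  imports "HOL-Analysis.Analysis"
begin

definition lasso_obj :: "real^'n^'m \<Rightarrow> real^'m \<Rightarrow> real \<Rightarrow> real^'n \<Rightarrow> real" where
  "lasso_obj T y lam x = lam / 2 * (norm (T *v x - y))\<^sup>2 + (\<Sum>i\<in>UNIV. \<bar>x $ i\<bar>)"

definition lasso_sol :: "real^'n^'m \<Rightarrow> real^'m \<Rightarrow> real \<Rightarrow> real^'n" where
  "lasso_sol T y lam = (THE x. \<forall>z. lasso_obj T y lam x \<le> lasso_obj T y lam z)"

definition lasso_supp :: "real^'n^'m \<Rightarrow> real^'m \<Rightarrow> real \<Rightarrow> 'n set" where
  "lasso_supp T y lam = {i. lasso_sol T y lam $ i \<noteq> 0}"

definition gram :: "real^'n^'m \<Rightarrow> 'n \<Rightarrow> 'n \<Rightarrow> real" where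
  "gram T i j = column i T \<bullet> column j T"

text \<open>S_J = ((T^J)^T T^J)^{-1}, as a J x J indexed matrix (extended by 0 outside J x J).\<close>
definition SJ :: "real^'n^'m \<Rightarrow> 'n set \<Rightarrow> 'n \<Rightarrow> 'n \<Rightarrow> real" where
  "SJ T J = (THE S. (\<forall>i\<in>J. \<forall>j\<in>J. (\<Sum>k\<in>J. gram T i k * S k j) = (if i = j then 1 else 0))
                 \<and> (\<forall>i j. (i \<notin> J \<or> j \<notin> J) \<longrightarrow> S i j = 0))"

definition positive_cone_condition :: "real^'n^'m \<Rightarrow> bool" where
  "positive_cone_condition T \<longleftrightarrow>
     (\<forall>J::'n set. J \<noteq> {} \<longrightarrow>
        (\<forall>i\<in>J. SJ T J i i - (\<Sum>j\<in>J - {i}. \<bar>SJ T J i j\<bar>) \<ge> 0))"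

end

theory Submission imports Defs begin

definition l1 :: "real^'n \<Rightarrow> real" where "l1 v = (\<Sum>i\<in>UNIV. \<bar>v $ i\<bar>)"

lemma obj_l1: "lasso_obj T y mu x = mu / 2 * (norm (T *v x - y))\<^sup>2 + l1 x"
  by (simp add: lasso_obj_def l1_def)

lemma aux_lin: "(a::real) = b + 2 * c + d \<Longrightarrow> mu / 2 * a = mu / 2 * b + mu * c + mu / 2 * d"
  by (simp add: algebra_simps)

lemma obj_diff:
  "lasso_obj T y mu v - lasso_obj T y mu z =
     mu * ((T *v z - y) \<bullet> (T *v (v - z))) + mu / 2 * (norm (T *v (v - z)))\<^sup>2 + (l1 v - l1 z)"
proof -
  have e: "T *v v - y = (T *v z - y) + T *v (v - z)"
    by (simp add: matrix_vector_mult_diff_distrib)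
  have "(norm (T *v v - y))\<^sup>2 = (norm (T *v z - y))\<^sup>2 + 2 * ((T *v z - y) \<bullet> (T *v (v - z))) + (norm (T *v (v - z)))\<^sup>2"
    unfolding e by (simp add: power2_norm_eq_inner inner_add_left inner_add_right inner_commute)
  then have "mu / 2 * (norm (T *v v - y))\<^sup>2 = mu / 2 * (norm (T *v z - y))\<^sup>2 + mu * ((T *v z - y) \<bullet> (T *v (v - z))) + mu / 2 * (norm (T *v (v - z)))\<^sup>2"
    by (rule aux_lin)
  then show ?thesis unfolding obj_l1 by linarith
qed

lemma l1_convex:
  assumes "0 \<le> t" "t \<le> 1"
  shows "l1 (z + t *\<^sub>R (v - z)) \<le> (1 - t) * l1 z + t * l1 v"
proof -
  have "\<And>i. \<bar>(z + t *\<^sub>R (v - z)) $ i\<bar> \<le> (1 - t) * \<bar>z $ i\<bar> + t * \<bar>v $ i\<bar>"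
  proof -
    fix i
    have "(z + t *\<^sub>R (v - z)) $ i = (1 - t) * z $ i + t * v $ i" by (simp add: algebra_simps)
    also have "\<bar>\<dots>\<bar> \<le> \<bar>(1 - t) * z $ i\<bar> + \<bar>t * v $ i\<bar>" by (rule abs_triangle_ineq)
    also have "\<dots> = (1 - t) * \<bar>z $ i\<bar> + t * \<bar>v $ i\<bar>" using assms by (simp add: abs_mult)
    finally show "?thesis i" .
  qed
  then have "l1 (z + t *\<^sub>R (v - z)) \<le> (\<Sum>i\<in>UNIV. (1 - t) * \<bar>z $ i\<bar> + t * \<bar>v $ i\<bar>)"
    unfolding l1_def by (rule sum_mono)
  also have "\<dots> = (1 - t) * l1 z + t * l1 v"
    by (simp add: l1_def sum.distrib sum_distrib_left)
  finally show ?thesis .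
qed

lemma real_lim_lemma:
  fixes p q :: real
  assumes "\<And>t. 0 < t \<Longrightarrow> t \<le> 1 \<Longrightarrow> 0 \<le> p + q * t"
  shows "0 \<le> p"
proof (rule ccontr)
  assume "\<not> 0 \<le> p"
  define t where "t = min 1 (- p / (2 * \<bar>q\<bar> + 1))"
  have "0 < -p / (2 * \<bar>q\<bar> + 1)" using \<open>\<not> 0 \<le> p\<close> by (intro divide_pos_pos) auto
  then have tp: "0 < t" "t \<le> 1" by (auto simp: t_def)
  have d: "0 < 2 * \<bar>q\<bar> + 1" by simp
  have "t \<le> -p / (2 * \<bar>q\<bar> + 1)" by (simp add: t_def)
  then have "t * (2 * \<bar>q\<bar> + 1) \<le> (-p / (2 * \<bar>q\<bar> + 1)) * (2 * \<bar>q\<bar> + 1)"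
    using d by (intro mult_right_mono) auto
  then have "t * (2 * \<bar>q\<bar> + 1) \<le> - p" using d by simp
  moreover have "q * t \<le> \<bar>q\<bar> * t" using tp by (simp add: mult_right_mono)
  moreover have "t * (2 * \<bar>q\<bar> + 1) = 2 * (\<bar>q\<bar> * t) + t" by (simp add: algebra_simps)
  moreover have "0 \<le> \<bar>q\<bar> * t" using tp by simp
  ultimately have "p + q * t < 0" using tp by linarith
  with assms[OF tp] show False by simp
qed

lemma VI:
  assumes min: "\<forall>u. lasso_obj T y mu z \<le> lasso_obj T y mu u" and mu: "0 < mu"
  shows "0 \<le> mu * ((T *v z - y) \<bullet> (T *v (v - z))) + (l1 v - l1 z)"
proof -
  let ?a = "mu * ((T *v z - y) \<bullet> (T *v (v - z)))"
  let ?b = "mu / 2 * (norm (T *v (v - z)))\<^sup>2"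
  have "0 \<le> (?a + (l1 v - l1 z)) + ?b * t" if t: "0 < t" "t \<le> 1" for t
  proof -
    let ?u = "z + t *\<^sub>R (v - z)"
    have d: "?u - z = t *\<^sub>R (v - z)" by simp
    have Tu: "T *v (?u - z) = t *\<^sub>R (T *v (v - z))"
      unfolding d by (simp add: matrix_vector_mult_scaleR)
    have Tn: "norm (T *v (?u - z)) = t * norm (T *v (v - z))"
      unfolding Tu using t by simp
    have "0 \<le> lasso_obj T y mu ?u - lasso_obj T y mu z" using min by simp
    also have "\<dots> = t * ?a + t * t * ?b + (l1 ?u - l1 z)"
      unfolding obj_diff Tn unfolding Tu by (simp add: inner_scaleR_right power_mult_distrib power2_eq_square algebra_simps)
    also have "\<dots> \<le> t * ?a + t * t * ?b + t * (l1 v - l1 z)"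
      using l1_convex[of t z v] t by (simp add: algebra_simps)
    finally have "0 \<le> t * ((?a + (l1 v - l1 z)) + ?b * t)" by (simp add: algebra_simps)
    then show ?thesis using t by (simp add: zero_le_mult_iff)
  qed
  then show ?thesis using real_lim_lemma by blast
qed

lemma growth:
  assumes min: "\<forall>u. lasso_obj T y mu z \<le> lasso_obj T y mu u" and mu: "0 < mu"
  shows "lasso_obj T y mu z + mu / 2 * (norm (T *v (v - z)))\<^sup>2 \<le> lasso_obj T y mu v"
  using VI[OF assms, of v] obj_diff[of T y mu v z] by linarith

lemma obj_cont: "continuous_on S (lasso_obj T y mu)"
  unfolding lasso_obj_def[abs_def]
  by (intro continuous_intros linear_continuous_on matrix_vector_mul_linear bounded_linear_intros)

lemma exist_min:
  assumes mu: "0 < mu"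
  shows "\<exists>z. \<forall>u. lasso_obj T y mu z \<le> lasso_obj T y mu u"
proof -
  define R where "R = lasso_obj T y mu 0"
  have R0: "0 \<le> R" using mu by (simp add: R_def lasso_obj_def)
  obtain z where zS: "z \<in> cball 0 R" and zmin: "\<forall>u\<in>cball 0 R. lasso_obj T y mu z \<le> lasso_obj T y mu u"
    using continuous_attains_inf[OF compact_cball _ obj_cont[of _ T y mu], of 0 R] R0 by auto
  have "lasso_obj T y mu z \<le> lasso_obj T y mu u" for u
  proof (cases "u \<in> cball 0 R")
    case True then show ?thesis using zmin by auto
  next
    case False
    then have "R < norm u" by simp
    also have "\<dots> \<le> l1 u" unfolding l1_def by (rule norm_le_l1_cart)
    also have "\<dots> \<le> lasso_obj T y mu u" unfolding obj_l1 using mu by simp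
    finally have "R < lasso_obj T y mu u" .
    moreover have "lasso_obj T y mu z \<le> R" using zmin R0 unfolding R_def by auto
    ultimately show ?thesis by simp
  qed
  then show ?thesis by blast
qed

lemma uniq_min:
  assumes inj: "inj (\<lambda>x. T *v x)" and mu: "0 < mu"
    and z: "\<forall>u. lasso_obj T y mu z \<le> lasso_obj T y mu u"
    and z': "\<forall>u. lasso_obj T y mu z' \<le> lasso_obj T y mu u"
  shows "z' = z"
proof -
  have "lasso_obj T y mu z + mu / 2 * (norm (T *v (z' - z)))\<^sup>2 \<le> lasso_obj T y mu z'"
    by (rule growth[OF z mu])
  moreover have "lasso_obj T y mu z' \<le> lasso_obj T y mu z" using z' by simp
  ultimately have "mu / 2 * (norm (T *v (z' - z)))\<^sup>2 \<le> 0" by simp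
  then have "(norm (T *v (z' - z)))\<^sup>2 \<le> 0" using mu by (simp add: mult_le_0_iff)
  then have "T *v (z' - z) = 0" by simp
  then have "T *v z' = T *v z" by (simp add: matrix_vector_mult_diff_distrib)
  then show ?thesis using inj by (simp add: inj_def)
qed

lemma sol_min:
  assumes inj: "inj (\<lambda>x. T *v x)" and mu: "0 < mu"
  shows "\<forall>u. lasso_obj T y mu (lasso_sol T y mu) \<le> lasso_obj T y mu u"
proof -
  have "\<exists>!z. \<forall>u. lasso_obj T y mu z \<le> lasso_obj T y mu u"
    using exist_min[OF mu] uniq_min[OF inj mu] by blast
  then show ?thesis unfolding lasso_sol_def by (rule theI')
qed

lemma kkt_aux:
  assumes min: "\<forall>u. lasso_obj T y mu z \<le> lasso_obj T y mu u" and mu: "0 < mu"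
  shows "0 \<le> - (mu * t * (column j T \<bullet> (y - T *v z))) + (\<bar>z $ j + t\<bar> - \<bar>z $ j\<bar>)"
proof -
  let ?v = "z + t *\<^sub>R axis j 1"
  have "0 \<le> mu * ((T *v z - y) \<bullet> (T *v (?v - z))) + (l1 ?v - l1 z)" by (rule VI[OF min mu])
  also have "T *v (?v - z) = t *\<^sub>R column j T"
    by (simp add: matrix_vector_mult_scaleR matrix_vector_mult_basis)
  also have "(T *v z - y) \<bullet> (t *\<^sub>R column j T) = - (t * (column j T \<bullet> (y - T *v z)))"
    by (simp add: inner_diff_left inner_diff_right inner_commute algebra_simps)
  also have "l1 ?v - l1 z = (\<Sum>i\<in>UNIV. \<bar>?v $ i\<bar> - \<bar>z $ i\<bar>)"
    by (simp add: l1_def sum_subtractf)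
  also have "\<dots> = (\<Sum>i\<in>UNIV. if i = j then \<bar>z $ j + t\<bar> - \<bar>z $ j\<bar> else 0)"
    by (rule sum.cong) (auto simp: axis_def)
  also have "\<dots> = \<bar>z $ j + t\<bar> - \<bar>z $ j\<bar>" by simp
  finally show ?thesis by (simp add: algebra_simps)
qed

lemma kkt:
  assumes min: "\<forall>u. lasso_obj T y mu z \<le> lasso_obj T y mu u" and mu: "0 < mu"
  shows "\<bar>mu * (column j T \<bullet> (y - T *v z))\<bar> \<le> 1"
    and "z $ j \<noteq> 0 \<Longrightarrow> mu * (column j T \<bullet> (y - T *v z)) = sgn (z $ j)"
proof -
  let ?r = "mu * (column j T \<bullet> (y - T *v z))"
  have k: "0 \<le> - (?r * t) + (\<bar>z $ j + t\<bar> - \<bar>z $ j\<bar>)" for t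
    using kkt_aux[OF min mu, of t j] by (simp add: algebra_simps)
  have "\<bar>z $ j + t\<bar> - \<bar>z $ j\<bar> \<le> \<bar>t\<bar>" for t by (simp add: abs_triangle_ineq4)
  from k[of 1] k[of "-1"] this[of 1] this[of "-1"] show "\<bar>?r\<bar> \<le> 1" by (simp add: abs_le_iff)
  assume nz: "z $ j \<noteq> 0"
  show "?r = sgn (z $ j)"
  proof (cases "z $ j > 0")
    case True
    from k[of "- z $ j"] True have "z $ j \<le> ?r * z $ j" by simp
    then have "1 \<le> ?r" using True by simp
    with \<open>\<bar>?r\<bar> \<le> 1\<close> True show ?thesis by simp
  next
    case False
    with nz have neg: "z $ j < 0" by simp
    from k[of "- z $ j"] neg have "- z $ j \<le> ?r * z $ j" by simp
    then have "0 \<le> (?r + 1) * z $ j" by (simp add: algebra_simps)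
    then have "?r \<le> -1" using neg by (simp add: zero_le_mult_iff)
    with \<open>\<bar>?r\<bar> \<le> 1\<close> neg show ?thesis by simp
  qed
qed

lemma colT: "column i T \<bullet> (T *v v) = (\<Sum>k\<in>UNIV. gram T i k * v $ k)"
  unfolding matrix_mult_sum scalar_mult_eq_scaleR gram_def
  by (simp add: inner_sum_right algebra_simps)

lemma normT: "(norm (T *v v))\<^sup>2 = (\<Sum>i\<in>UNIV. v $ i * (column i T \<bullet> (T *v v)))"
proof -
  have "(norm (T *v v))\<^sup>2 = (T *v v) \<bullet> (T *v v)" by (simp add: power2_norm_eq_inner)
  also have "\<dots> = (\<Sum>i\<in>UNIV. v $ i *\<^sub>R column i T) \<bullet> (T *v v)"
    by (subst (1) matrix_mult_sum) (simp add: scalar_mult_eq_scaleR)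
  also have "\<dots> = (\<Sum>i\<in>UNIV. v $ i * (column i T \<bullet> (T *v v)))"
    by (simp add: inner_sum_left)
  finally show ?thesis .
qed

lemma sum_J:
  assumes "\<forall>k. k \<notin> J \<longrightarrow> v $ k = 0"
  shows "(\<Sum>k\<in>UNIV. f k * v $ k) = (\<Sum>k\<in>J. f k * (v::real^'n) $ k)"
  by (rule sum.mono_neutral_right) (use assms in auto)

lemma zero_J:
  fixes T :: "real^'n^'m" and v :: "real^'n"
  assumes inj: "inj (\<lambda>x. T *v x)"
    and out: "\<forall>k. k \<notin> J \<longrightarrow> v $ k = 0"
    and in0: "\<forall>i\<in>J. column i T \<bullet> (T *v v) = 0"
  shows "v = 0"
proof -
  have "(\<Sum>i\<in>UNIV. v $ i * (column i T \<bullet> (T *v v))) = 0"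
    by (rule sum.neutral) (use out in0 in auto)
  then have "(norm (T *v v))\<^sup>2 = 0" using normT[of T v] by simp
  then have "T *v v = T *v 0" by simp
  then show ?thesis using inj by (simp add: inj_def)
qed

definition Phi :: "real^'n^'m \<Rightarrow> 'n set \<Rightarrow> real^'n \<Rightarrow> real^'n" where
  "Phi T J v = (\<chi> i. if i \<in> J then column i T \<bullet> (T *v (\<chi> k. if k \<in> J then v $ k else 0)) else v $ i)"

lemma Phi_linear:
  fixes T :: "real^'n^'m"
  shows "linear (Phi T J)"
proof (rule linearI)
  fix a b :: "real^'n"
  have e: "(\<chi> k. if k \<in> J then (a + b) $ k else 0) = (\<chi> k. if k \<in> J then a $ k else 0) + (\<chi> k. if k \<in> J then b $ k else 0)"
    by (simp add: vec_eq_iff)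
  show "Phi T J (a + b) = Phi T J a + Phi T J b"
    unfolding Phi_def e by (simp add: vec_eq_iff matrix_vector_right_distrib inner_add_right)
next
  fix r and b :: "real^'n"
  have e: "(\<chi> k. if k \<in> J then (r *\<^sub>R b) $ k else 0) = r *\<^sub>R (\<chi> k. if k \<in> J then b $ k else 0)"
    by (simp add: vec_eq_iff)
  show "Phi T J (r *\<^sub>R b) = r *\<^sub>R Phi T J b"
    unfolding Phi_def e by (simp add: vec_eq_iff matrix_vector_mult_scaleR)
qed

lemma Phi_inj:
  fixes T :: "real^'n^'m"
  assumes inj: "inj (\<lambda>x. T *v x)"
  shows "inj (Phi T J)"
proof -
  have "v = 0" if "Phi T J v = 0" for v
  proof -
    have out: "\<forall>k. k \<notin> J \<longrightarrow> v $ k = 0"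
    proof (intro allI impI)
      fix k assume k: "k \<notin> J"
      have "Phi T J v $ k = 0" using that by simp
      then show "v $ k = 0" using k by (simp add: Phi_def)
    qed
    then have vv: "(\<chi> k. if k \<in> J then v $ k else 0) = v" by (auto simp: vec_eq_iff)
    have "\<forall>i\<in>J. column i T \<bullet> (T *v v) = 0"
    proof
      fix i assume i: "i \<in> J"
      have "Phi T J v $ i = 0" using that by simp
      then show "column i T \<bullet> (T *v v) = 0" using i by (simp add: Phi_def vv)
    qed
    then show ?thesis using zero_J[OF inj out] by blast
  qed
  then show ?thesis using Phi_linear[of T J]
    by (metis linear_injective_0 module_hom_zero)
qed

lemma SJ_prop:
  assumes inj: "inj (\<lambda>x. T *v x)"
  shows "(\<forall>i\<in>J. \<forall>j\<in>J. (\<Sum>k\<in>J. gram T i k * SJ T J k j) = (if i = j then 1 else 0))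
                 \<and> (\<forall>i j. (i \<notin> J \<or> j \<notin> J) \<longrightarrow> SJ T J i j = 0)"
proof -
  let ?P = "\<lambda>S. (\<forall>i\<in>J. \<forall>j\<in>J. (\<Sum>k\<in>J. gram T i k * S k j) = (if i = j then 1 else 0))
                 \<and> (\<forall>i j. (i \<notin> J \<or> j \<notin> J) \<longrightarrow> S i j = 0)"
  have surj: "surj (Phi T J)"
    using linear_injective_imp_surjective[OF Phi_linear Phi_inj[OF inj]] by simp
  define u where "u = (\<lambda>j. SOME u. Phi T J u = axis j 1)"
  have u: "Phi T J (u j) = axis j 1" for j
    unfolding u_def using surj by (metis (mono_tags, lifting) someI_ex surjD)
  define S where "S = (\<lambda>i j. if i \<in> J \<and> j \<in> J then u j $ i else 0)"
  have ex: "?P S"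
  proof (intro conjI ballI allI impI)
    fix i j assume ij: "i \<in> J" "j \<in> J"
    have uout: "\<forall>k. k \<notin> J \<longrightarrow> u j $ k = 0"
    proof (intro allI impI)
      fix k assume "k \<notin> J"
      have "Phi T J (u j) $ k = axis j 1 $ k" using u by simp
      then show "u j $ k = 0" using \<open>k \<notin> J\<close> ij by (auto simp: Phi_def axis_def)
    qed
    then have vv: "(\<chi> k. if k \<in> J then u j $ k else 0) = u j" by (auto simp: vec_eq_iff)
    have "(\<Sum>k\<in>J. gram T i k * S k j) = (\<Sum>k\<in>J. gram T i k * u j $ k)"
      by (rule sum.cong) (use ij in \<open>auto simp: S_def\<close>)
    also have "\<dots> = column i T \<bullet> (T *v u j)" unfolding colT using sum_J[OF uout] by simp
    also have "\<dots> = Phi T J (u j) $ i" using ij by (simp add: Phi_def vv)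
    also have "\<dots> = (if i = j then 1 else 0)" by (simp add: u axis_def)
    finally show "(\<Sum>k\<in>J. gram T i k * S k j) = (if i = j then 1 else 0)" .
  next
    fix i j assume "i \<notin> J \<or> j \<notin> J"
    then show "S i j = 0" by (auto simp: S_def)
  qed
  have un: "S' = S''" if "?P S'" "?P S''" for S' S''
  proof (intro ext)
    fix a b
    show "S' a b = S'' a b"
    proof (cases "a \<in> J \<and> b \<in> J")
      case False then show ?thesis using that by auto
    next
      case True
      define D where "D = (\<chi> k. if k \<in> J then S' k b - S'' k b else 0)"
      have Dout: "\<forall>k. k \<notin> J \<longrightarrow> D $ k = 0" by (simp add: D_def)
      have "\<forall>i\<in>J. column i T \<bullet> (T *v D) = 0"
      proof
        fix i assume i: "i \<in> J"
        have "column i T \<bullet> (T *v D) = (\<Sum>k\<in>J. gram T i k * D $ k)"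
          unfolding colT using sum_J[OF Dout] by simp
        also have "\<dots> = (\<Sum>k\<in>J. gram T i k * S' k b) - (\<Sum>k\<in>J. gram T i k * S'' k b)"
          by (simp add: D_def sum_subtractf[symmetric] algebra_simps)
        also have "\<dots> = 0" using that i True by simp
        finally show "column i T \<bullet> (T *v D) = 0" .
      qed
      then have "D = 0" using zero_J[OF inj Dout] by blast
      then have "D $ a = 0" by simp
      then show ?thesis using True by (simp add: D_def)
    qed
  qed
  have "\<exists>!S. ?P S" using ex un by blast
  then show ?thesis unfolding SJ_def by (rule theI')
qed

lemma solve_J:
  assumes inj: "inj (\<lambda>x. T *v x)"
    and out: "\<forall>k. k \<notin> J \<longrightarrow> w $ k = 0"
    and eq: "\<forall>j\<in>J. column j T \<bullet> (T *v w) = g j"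
    and i: "i \<in> J"
  shows "w $ i = (\<Sum>k\<in>J. SJ T J i k * g k)"
proof -
  have S: "\<forall>i\<in>J. \<forall>j\<in>J. (\<Sum>k\<in>J. gram T i k * SJ T J k j) = (if i = j then 1 else 0)"
    using SJ_prop[OF inj] by blast
  define v where "v = (\<chi> i. if i \<in> J then (\<Sum>k\<in>J. SJ T J i k * g k) else 0)"
  have Dout: "\<forall>k. k \<notin> J \<longrightarrow> (v - w) $ k = 0" using out by (simp add: v_def)
  have vout: "\<forall>k. k \<notin> J \<longrightarrow> v $ k = 0" by (simp add: v_def)
  have "\<forall>a\<in>J. column a T \<bullet> (T *v (v - w)) = 0"
  proof
    fix a assume a: "a \<in> J"
    have "column a T \<bullet> (T *v v) = (\<Sum>j\<in>J. gram T a j * v $ j)"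
      unfolding colT using sum_J[OF vout] by simp
    also have "\<dots> = (\<Sum>j\<in>J. \<Sum>k\<in>J. gram T a j * SJ T J j k * g k)"
      by (rule sum.cong) (auto simp: v_def sum_distrib_left mult.assoc)
    also have "\<dots> = (\<Sum>k\<in>J. \<Sum>j\<in>J. gram T a j * SJ T J j k * g k)"
      by (rule sum.swap)
    also have "\<dots> = (\<Sum>k\<in>J. (\<Sum>j\<in>J. gram T a j * SJ T J j k) * g k)"
      by (simp add: sum_distrib_right)
    also have "\<dots> = (\<Sum>k\<in>J. (if a = k then g k else 0))"
      by (rule sum.cong) (use S a in auto)
    also have "\<dots> = g a" using a by (simp add: sum.delta)
    finally show "column a T \<bullet> (T *v (v - w)) = 0"
      using eq a by (simp add: matrix_vector_mult_diff_distrib inner_diff_right)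
  qed
  then have "v - w = 0" using zero_J[OF inj Dout] by blast
  then have "w $ i = v $ i" by (simp add: vec_eq_iff)
  then show ?thesis using i by (simp add: v_def)
qed

lemma sign_match:
  fixes d c m g :: real
  assumes "\<bar>d - c\<bar> < m" "m \<le> g" "g \<le> (if \<bar>c\<bar> < 1 then 1 - \<bar>c\<bar> else 1)"
    and "\<bar>c\<bar> \<le> 1" "d = sgn z" "z \<noteq> 0"
  shows "d = c"
proof (cases "\<bar>c\<bar> < 1")
  case True
  have "\<bar>d\<bar> = 1" using assms(5,6) by (simp add: abs_sgn)
  then have "1 - \<bar>c\<bar> \<le> \<bar>d - c\<bar>" by linarith
  with True assms(1-3) show ?thesis by simp
next
  case False
  then have "c = 1 \<or> c = -1" using assms(4) by linarith
  moreover have "d = 1 \<or> d = -1" using assms(5,6) by (cases "z > 0") auto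
  moreover have "\<bar>d - c\<bar> < 1" using False assms(1-3) by simp
  ultimately show ?thesis by auto
qed

lemma sgn_abs_id: "(z::real) \<noteq> 0 \<Longrightarrow> sgn z * z = \<bar>z\<bar>"
  by (cases "z > 0") auto

lemma diffsq_bound:
  fixes a b W Y :: real
  assumes "\<bar>a - b\<bar> \<le> W" "0 \<le> a" "0 \<le> b" "a \<le> Y" "b \<le> Y"
  shows "a\<^sup>2 - b\<^sup>2 \<le> W * (2 * Y)"
proof -
  have e: "a\<^sup>2 - b\<^sup>2 = (a - b) * (a + b)" by (simp add: power2_eq_square algebra_simps)
  have "(a - b) * (a + b) \<le> \<bar>a - b\<bar> * (a + b)" using assms by (intro mult_right_mono) auto
  also have "\<dots> \<le> W * (2 * Y)" using assms by (intro mult_mono) auto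
  finally show ?thesis unfolding e .
qed

theorem mainTheorem17:
  fixes T :: "real^'n^'m" and y :: "real^'m" and lam :: real
  assumes "inj (\<lambda>x. T *v x)"
    and "positive_cone_condition T"
    and "lam > 0"
  shows "\<exists>\<epsilon>. 0 < \<epsilon> \<and> \<epsilon> < lam \<and>
    (\<forall>i\<in>lasso_supp T y lam. \<forall>\<mu>\<in>{lam - \<epsilon>..lam}.
        \<bar>lasso_sol T y \<mu> $ i\<bar> \<le> \<bar>lasso_sol T y lam $ i\<bar>)"
proof -
  note inj = assms(1) and pcc = assms(2) and lam = assms(3)
  define x where "x = lasso_sol T y lam"
  have xmin: "\<forall>u. lasso_obj T y lam x \<le> lasso_obj T y lam u"
    unfolding x_def by (rule sol_min[OF inj lam])
  define c where "c = (\<lambda>j. lam * (column j T \<bullet> (y - T *v x)))"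
  have cabs: "\<bar>c j\<bar> \<le> 1" for j unfolding c_def by (rule kkt(1)[OF xmin lam])
  have csgn: "x $ j \<noteq> 0 \<Longrightarrow> c j = sgn (x $ j)" for j unfolding c_def by (rule kkt(2)[OF xmin lam])
  define gap where "gap = (\<lambda>j. min (if \<bar>c j\<bar> < 1 then 1 - \<bar>c j\<bar> else 1) (if x $ j \<noteq> 0 then \<bar>x $ j\<bar> else 1))"
  define m where "m = Min (range gap)"
  have gpos: "0 < gap j" for j by (auto simp: gap_def)
  have mle: "m \<le> gap j" for j unfolding m_def by (rule Min_le) auto
  have mpos: "0 < m" unfolding m_def using gpos by (subst Min_gr_iff) auto
  define K where "K = (\<Sum>j\<in>UNIV. norm (column j T))"
  have Kb: "norm (column j T) \<le> K" for j unfolding K_def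
    by (rule member_le_sum) auto
  have K0: "0 \<le> K" unfolding K_def by (simp add: sum_nonneg)
  obtain e where e: "e > 0" "\<forall>v\<in>UNIV. e * norm v \<le> norm (T *v v)"
  proof -
    have "\<exists>e>0. \<forall>v\<in>UNIV. e * norm v \<le> norm (T *v v)"
      by (rule injective_imp_isometric) (use inj in \<open>auto simp: inj_def matrix_vector_mul_bounded_linear\<close>)
    then show ?thesis using that by blast
  qed
  define ny where "ny = norm y"
  define A where "A = 3 * K * ny + 2 * ny / (lam * e)"
  have A0: "0 \<le> A" unfolding A_def ny_def using K0 lam e by simp
  define eps where "eps = min (lam / 2) (m / (2 * (A + 1)))"
  have eps0: "0 < eps" using lam mpos A0 by (simp add: eps_def)
  have epsl: "eps < lam" using lam by (simp add: eps_def)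
  have Aeps: "A * eps < m"
  proof -
    have "A * eps \<le> A * (m / (2 * (A + 1)))" using A0 by (intro mult_left_mono) (auto simp: eps_def)
    also have "\<dots> = m * (A / (2 * (A + 1)))" by simp
    also have "\<dots> < m * 1" using A0 mpos by (intro mult_strict_left_mono) auto
    finally show ?thesis by simp
  qed
  have main: "\<bar>lasso_sol T y mu $ i\<bar> \<le> \<bar>x $ i\<bar>"
    if i: "i \<in> lasso_supp T y lam" and mu: "mu \<in> {lam - eps..lam}" for i mu
  proof -
    define \<delta> where "\<delta> = lam - mu"
    have d0: "0 \<le> \<delta>" "\<delta> \<le> eps" using mu by (auto simp: \<delta>_def)
    have mu0: "0 < mu" using mu lam by (auto simp: eps_def)
    define z where "z = lasso_sol T y mu"
    have zmin: "\<forall>u. lasso_obj T y mu z \<le> lasso_obj T y mu u"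
      unfolding z_def by (rule sol_min[OF inj mu0])
    have xi: "x $ i \<noteq> 0" using i by (simp add: lasso_supp_def x_def)
    have resb: "norm (T *v v - y) \<le> ny" if "\<forall>u. lasso_obj T y nu v \<le> lasso_obj T y nu u" "0 < nu" for v nu
    proof -
      have "lasso_obj T y nu v \<le> lasso_obj T y nu 0" using that by simp
      then have "nu / 2 * (norm (T *v v - y))\<^sup>2 + l1 v \<le> nu / 2 * ny\<^sup>2"
        by (simp add: obj_l1 l1_def ny_def)
      moreover have "0 \<le> l1 v" by (simp add: l1_def sum_nonneg)
      ultimately have "nu / 2 * (norm (T *v v - y))\<^sup>2 \<le> nu / 2 * ny\<^sup>2" by linarith
      then have "(norm (T *v v - y))\<^sup>2 \<le> ny\<^sup>2" using that(2) by simp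
      then show ?thesis using ny_def by (simp add: power2_le_iff_abs_le)
    qed
    have rz: "norm (T *v z - y) \<le> ny" by (rule resb[OF zmin mu0])
    have rx: "norm (T *v x - y) \<le> ny" by (rule resb[OF xmin lam])
    define W where "W = norm (T *v (z - x))"
    have W0: "0 \<le> W" by (simp add: W_def)
    have WW: "norm (T *v (x - z)) = W" unfolding W_def
      by (metis matrix_vector_mult_diff_distrib norm_minus_commute)
    have g1: "lasso_obj T y mu z + mu / 2 * W\<^sup>2 \<le> lasso_obj T y mu x"
      using growth[OF zmin mu0, of x] WW by simp
    have g2: "lasso_obj T y lam x + lam / 2 * W\<^sup>2 \<le> lasso_obj T y lam z"
      using growth[OF xmin lam, of z] W_def by simp
    define Nz where "Nz = norm (T *v z - y)"
    define Nx where "Nx = norm (T *v x - y)"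
    have "(mu + lam) * W\<^sup>2 \<le> \<delta> * (Nz\<^sup>2 - Nx\<^sup>2)"
      using g1 g2 unfolding obj_l1 Nz_def[symmetric] Nx_def[symmetric] \<delta>_def
      by (simp add: algebra_simps)
    also have "Nz\<^sup>2 - Nx\<^sup>2 \<le> W * (2 * ny)"
    proof (rule diffsq_bound)
      have "\<bar>Nz - Nx\<bar> \<le> norm ((T *v z - y) - (T *v x - y))"
        unfolding Nz_def Nx_def by (rule norm_triangle_ineq3)
      also have "\<dots> = W" by (simp add: W_def matrix_vector_mult_diff_distrib)
      finally show "\<bar>Nz - Nx\<bar> \<le> W" .
    qed (use rz rx in \<open>auto simp: Nz_def Nx_def\<close>)
    finally have "(mu + lam) * W\<^sup>2 \<le> \<delta> * (W * (2 * ny))" using d0 by (simp add: mult_left_mono)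
    moreover have "lam * W\<^sup>2 \<le> (mu + lam) * W\<^sup>2" using mu0 by (simp add: mult_right_mono)
    ultimately have "W * (lam * W) \<le> W * (2 * \<delta> * ny)" by (simp add: power2_eq_square algebra_simps)
    then have hW: "lam * W \<le> 2 * \<delta> * ny"
      using W0 by (cases "W = 0") (auto simp: ny_def d0 mult_le_cancel_left)
    have coord: "\<bar>z $ j - x $ j\<bar> < m" for j
    proof -
      have "\<bar>z $ j - x $ j\<bar> \<le> norm (z - x)" using component_le_norm_cart[of "z - x" j] by simp
      also have "e * norm (z - x) \<le> W" using e W_def by simp
      then have "norm (z - x) \<le> W / e" using e by (simp add: field_simps)
      also have "W / e \<le> \<delta> * (2 * ny / (lam * e))" using hW lam e by (simp add: field_simps)
      also have "\<dots> \<le> \<delta> * A" using d0 K0 by (intro mult_left_mono) (auto simp: A_def ny_def)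
      also have "\<dots> \<le> eps * A" using d0 A0 by (intro mult_right_mono) auto
      finally show ?thesis using Aeps by (simp add: mult.commute)
    qed
    define d where "d = (\<lambda>j. mu * (column j T \<bullet> (y - T *v z)))"
    have dc: "\<bar>d j - c j\<bar> < m" for j
    proof -
      have r1: "\<bar>column j T \<bullet> (y - T *v z)\<bar> \<le> K * ny"
      proof -
        have "\<bar>column j T \<bullet> (y - T *v z)\<bar> \<le> norm (column j T) * norm (y - T *v z)"
          by (rule Cauchy_Schwarz_ineq2)
        also have "\<dots> \<le> K * ny" using Kb rz K0 by (intro mult_mono) (auto simp: norm_minus_commute)
        finally show ?thesis .
      qed
      have r2: "\<bar>column j T \<bullet> (y - T *v z) - column j T \<bullet> (y - T *v x)\<bar> \<le> K * W"
      proof -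
        have eq: "column j T \<bullet> (y - T *v z) - column j T \<bullet> (y - T *v x) = - (column j T \<bullet> (T *v (z - x)))"
          by (simp add: inner_diff_right matrix_vector_mult_diff_distrib)
        have "\<bar>- (column j T \<bullet> (T *v (z - x)))\<bar> \<le> norm (column j T) * W"
          using Cauchy_Schwarz_ineq2[of "column j T" "T *v (z - x)"] by (simp add: W_def)
        also have "\<dots> \<le> K * W" using Kb W0 by (intro mult_right_mono) auto
        finally show ?thesis unfolding eq .
      qed
      have "d j - c j = (mu - lam) * (column j T \<bullet> (y - T *v z))
           + lam * (column j T \<bullet> (y - T *v z) - column j T \<bullet> (y - T *v x))"
        by (simp add: d_def c_def algebra_simps)
      then have "\<bar>d j - c j\<bar> \<le> \<bar>mu - lam\<bar> * \<bar>column j T \<bullet> (y - T *v z)\<bar>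
           + lam * \<bar>column j T \<bullet> (y - T *v z) - column j T \<bullet> (y - T *v x)\<bar>"
        using lam by (simp add: abs_mult abs_triangle_ineq order_trans[OF abs_triangle_ineq])
      also have "\<dots> \<le> \<delta> * (K * ny) + lam * (K * W)"
        using d0 lam r1 r2 by (intro add_mono mult_mono) (auto simp: \<delta>_def)
      also have "lam * (K * W) \<le> K * (2 * \<delta> * ny)"
        using hW K0 by (simp add: mult.left_commute mult_left_mono)
      also have "\<delta> * (K * ny) + K * (2 * \<delta> * ny) = \<delta> * (3 * K * ny)" by (simp add: algebra_simps)
      also have "\<dots> \<le> \<delta> * A" using d0 lam e by (intro mult_left_mono) (auto simp: A_def ny_def)
      also have "\<dots> \<le> eps * A" using d0 A0 by (intro mult_right_mono) auto
      finally show ?thesis using Aeps by (simp add: mult.commute)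
    qed
    define J where "J = {j. z $ j \<noteq> 0}"
    have dsgn: "j \<in> J \<Longrightarrow> d j = sgn (z $ j)" for j
      unfolding d_def J_def by (rule kkt(2)[OF zmin mu0]) simp
    have dceq: "j \<in> J \<Longrightarrow> d j = c j" for j
    proof -
      assume j: "j \<in> J"
      have "gap j \<le> (if \<bar>c j\<bar> < 1 then 1 - \<bar>c j\<bar> else 1)" by (simp add: gap_def)
      then show "d j = c j" using sign_match[OF dc[of j] mle[of j] _ cabs[of j] dsgn[OF j]] j by (auto simp: J_def)
    qed
    have suppJ: "x $ j \<noteq> 0 \<Longrightarrow> j \<in> J" for j
    proof -
      assume "x $ j \<noteq> 0"
      then have "m \<le> \<bar>x $ j\<bar>" using mle[of j] by (simp add: gap_def)
      with coord[of j] show "j \<in> J" by (auto simp: J_def)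
    qed
    have iJ: "i \<in> J" using suppJ[OF xi] .
    define w where "w = z - x"
    have wout: "\<forall>k. k \<notin> J \<longrightarrow> w $ k = 0"
      using suppJ by (auto simp: w_def J_def)
    have weq: "\<forall>j\<in>J. column j T \<bullet> (T *v w) = c j * (1 / lam - 1 / mu)"
    proof
      fix j assume j: "j \<in> J"
      have "column j T \<bullet> (T *v w) = column j T \<bullet> (y - T *v x) - column j T \<bullet> (y - T *v z)"
        by (simp add: w_def inner_diff_right matrix_vector_mult_diff_distrib)
      also have "\<dots> = c j / lam - d j / mu" using lam mu0 by (simp add: c_def d_def)
      also have "\<dots> = c j * (1 / lam - 1 / mu)" using dceq[OF j] by (simp add: field_simps)
      finally show "column j T \<bullet> (T *v w) = c j * (1 / lam - 1 / mu)" .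
    qed
    define S where "S = SJ T J"
    have wi: "w $ i = (\<Sum>k\<in>J. S i k * (c k * (1 / lam - 1 / mu)))"
      unfolding S_def by (rule solve_J[OF inj wout weq iJ])
    have ci: "c i = sgn (x $ i)" using csgn[OF xi] .
    have ci2: "c i = sgn (z $ i)" using dceq[OF iJ] dsgn[OF iJ] by simp
    have cabs1: "\<bar>c k\<bar> = 1" if "k \<in> J" for k
    proof -
      have "c k = sgn (z $ k)" "z $ k \<noteq> 0" using dceq[OF that] dsgn[OF that] that by (auto simp: J_def)
      then show ?thesis by (cases "z $ k > 0") auto
    qed
    have Jne: "J \<noteq> {}" using iJ by auto
    have pc: "S i i - (\<Sum>k\<in>J - {i}. \<bar>S i k\<bar>) \<ge> 0"
      using pcc Jne iJ unfolding positive_cone_condition_def S_def by blast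
    have "(\<Sum>k\<in>J. S i k * c k * c i) = S i i * c i * c i + (\<Sum>k\<in>J - {i}. S i k * c k * c i)"
      using iJ by (simp add: sum.remove)
    also have "S i i * c i * c i = S i i" using cabs1[OF iJ] by (auto simp: abs_if split: if_splits)
    also have "(\<Sum>k\<in>J - {i}. S i k * c k * c i) \<ge> (\<Sum>k\<in>J - {i}. - \<bar>S i k\<bar>)"
    proof (rule sum_mono)
      fix k assume k: "k \<in> J - {i}"
      have "\<bar>S i k * c k * c i\<bar> = \<bar>S i k\<bar>" using cabs1[OF iJ] cabs1[of k] k by (simp add: abs_mult)
      then show "- \<bar>S i k\<bar> \<le> S i k * c k * c i" by linarith
    qed
    ultimately have pos: "0 \<le> (\<Sum>k\<in>J. S i k * c k * c i)" using pc by (simp add: sum_negf)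
    have "c i * w $ i = (1 / lam - 1 / mu) * (\<Sum>k\<in>J. S i k * c k * c i)"
      unfolding wi by (simp add: sum_distrib_left algebra_simps)
    also have "\<dots> \<le> 0"
    proof -
      have "1 / lam \<le> 1 / mu" using mu0 mu by (intro divide_left_mono) auto
      then show ?thesis using pos by (simp add: mult_nonpos_nonneg)
    qed
    finally have cw: "c i * w $ i \<le> 0" .
    show ?thesis
    proof (cases "z $ i = 0")
      case True then show ?thesis by (simp add: z_def[symmetric])
    next
      case False
      have "\<bar>z $ i\<bar> = c i * z $ i" using sgn_abs_id[OF False] ci2 by simp
      also have "\<dots> = c i * x $ i + c i * w $ i" by (simp add: w_def algebra_simps)
      also have "c i * x $ i = \<bar>x $ i\<bar>" using sgn_abs_id[OF xi] ci by simp
      finally show ?thesis using cw unfolding z_def by simp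
    qed
  qed
  show ?thesis
    by (rule exI[of _ eps]) (use eps0 epsl main in \<open>auto simp: x_def\<close>)
qed

end
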